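(* Assume that the graph Laplacian $\mathbf{L}$ has exactly $r$ distinct eigenvalues. A signal $f\in\mathcal{A}_{\mathbf{L}}$ is a positive semi-definite (respectively positive definite) function if and only if the $r\times r$ Hankel matrix $\mathbf{H}_r(f)$ is positive semi-definite (respectively positive definite), where $$\mathbf{H}_r(x)=\big(f_{\mathbb{1}}^\intercal\mathbf{L}^{i+j-2}x\big)_{i,j=1}^{r}.$$
   Context: Let $G$ be a graph with vertices $v_1,\dots,v_n$, symmetric non-negative weighted adjacency matrix $\mathbf{A}$, degree matrix $\mathbf{D}=\mathrm{diag}(\sum_k\mathbf{A}_{ik})$ (positive), and normalized Laplacian $\mathbf{L}=\mathbf{I}_n-\mathbf{D}^{-1/2}\mathbf{A}\mathbf{D}^{-1/2}$. Signals are vectors in $\mathcal{L}(G)\cong\mathbb{R}^n$ with standard basis $e_1,\dots,e_n$. Fix an orthonormal eigendecomposition $\mathbf{L}=\mathbf{U}\,\mathrm{diag}(\lambda_1,\dots,\lambda_n)\mathbf{U}^\intercal$ with columns $u_1,\dots,u_n$. Fourier transform $\hat{x}=\mathbf{U}^\intercal x$; convolution operator $\mathbf{C}_x=\mathbf{U}\,\mathrm{diag}(\hat{x})\mathbf{U}^\intercal$; $f_{\mathbb{1}}=\sum_{k=1}^n u_k$; $\mathcal{A}_{\mathbf{L}}=\mathrm{span}\{f_{\mathbb{1}},\mathbf{L}f_{\mathbb{1}},\dots,\mathbf{L}^{n-1}f_{\mathbb{1}}\}$. For $f\in\mathcal{L}(G)$ let $(\mathbf{K}_f)_{ij}=(\mathbf{C}_{e_j}f)(v_i)$;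 $f$ is called a positive semi-definite (positive definite) function if $\mathbf{K}_f$ is symmetric and positive semi-definite (strictly positive definite). *)

theory Defs
  imports "HOL-Analysis.Analysis"
begin

text \<open>Vertices are indexed by a finite type 'n (n = CARD('n)); signals are real^'n.\<close>

definition diag_mat :: "real ^ 'n \<Rightarrow> real ^ 'n ^ 'n" where
  "diag_mat v = (\<chi> i j. if i = j then v $ i else 0)"

definition mpow :: "real ^ 'n ^ 'n \<Rightarrow> nat \<Rightarrow> real ^ 'n ^ 'n" where
  "mpow M k = ((\<lambda>X. M ** X) ^^ k) (mat 1)"

definition degree_vec :: "real ^ 'n ^ 'n \<Rightarrow> real ^ 'n" where
  "degree_vec A = (\<chi> i. \<Sum>k\<in>UNIV. A $ i $ k)"

definition norm_laplacian :: "real ^ 'n ^ 'n \<Rightarrow> real ^ 'n ^ 'n" where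
  "norm_laplacian A =
     mat 1 - diag_mat (\<chi> i. 1 / sqrt (degree_vec A $ i)) ** A
             ** diag_mat (\<chi> i. 1 / sqrt (degree_vec A $ i))"

definition gft :: "real ^ 'n ^ 'n \<Rightarrow> real ^ 'n \<Rightarrow> real ^ 'n" where
  "gft U x = transpose U *v x"

definition conv_op :: "real ^ 'n ^ 'n \<Rightarrow> real ^ 'n \<Rightarrow> real ^ 'n ^ 'n" where
  "conv_op U x = U ** diag_mat (gft U x) ** transpose U"

definition f_one :: "real ^ 'n ^ 'n \<Rightarrow> real ^ 'n" where
  "f_one U = (\<Sum>k\<in>UNIV. column k U)"

definition krylov_space :: "real ^ 'n ^ 'n \<Rightarrow> real ^ 'n ^ 'n \<Rightarrow> (real ^ 'n) set" where
  "krylov_space L U = span {mpow L k *v f_one U | k. k < CARD('n)}"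

definition kernel_mat :: "real ^ 'n ^ 'n \<Rightarrow> real ^ 'n \<Rightarrow> real ^ 'n ^ 'n" where
  "kernel_mat U f = (\<chi> i j. (conv_op U (axis j 1) *v f) $ i)"

definition psd_mat :: "real ^ 'n ^ 'n \<Rightarrow> bool" where
  "psd_mat M \<longleftrightarrow> transpose M = M \<and> (\<forall>x. 0 \<le> x \<bullet> (M *v x))"

definition pd_mat :: "real ^ 'n ^ 'n \<Rightarrow> bool" where
  "pd_mat M \<longleftrightarrow> transpose M = M \<and> (\<forall>x. x \<noteq> 0 \<longrightarrow> 0 < x \<bullet> (M *v x))"

definition psd_function :: "real ^ 'n ^ 'n \<Rightarrow> real ^ 'n \<Rightarrow> bool" where
  "psd_function U f \<longleftrightarrow> psd_mat (kernel_mat U f)"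

definition pd_function :: "real ^ 'n ^ 'n \<Rightarrow> real ^ 'n \<Rightarrow> bool" where
  "pd_function U f \<longleftrightarrow> pd_mat (kernel_mat U f)"

text \<open>r x r matrices represented as nat => nat => real with indices 0..r-1.\<close>
definition psd_fin :: "nat \<Rightarrow> (nat \<Rightarrow> nat \<Rightarrow> real) \<Rightarrow> bool" where
  "psd_fin r H \<longleftrightarrow> (\<forall>i<r. \<forall>j<r. H i j = H j i) \<and>
     (\<forall>c :: nat \<Rightarrow> real. 0 \<le> (\<Sum>i<r. \<Sum>j<r. c i * H i j * c j))"

definition pd_fin :: "nat \<Rightarrow> (nat \<Rightarrow> nat \<Rightarrow> real) \<Rightarrow> bool" where
  "pd_fin r H \<longleftrightarrow> (\<forall>i<r. \<forall>j<r. H i j = H j i) \<and>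
     (\<forall>c :: nat \<Rightarrow> real. (\<exists>i<r. c i \<noteq> 0) \<longrightarrow> 0 < (\<Sum>i<r. \<Sum>j<r. c i * H i j * c j))"

text \<open>Hankel matrix H_r(x), 0-based: entry (i,j) = f_1^T L^(i+j) x.\<close>
definition hankel :: "real ^ 'n ^ 'n \<Rightarrow> real ^ 'n ^ 'n \<Rightarrow> real ^ 'n \<Rightarrow> nat \<Rightarrow> nat \<Rightarrow> real" where
  "hankel L U x i j = f_one U \<bullet> (mpow L (i + j) *v x)"

end

theory Submission
  imports Defs "HOL-Computational_Algebra.Polynomial"
begin

lemma diag_mult_vec: "diag_mat a *v b = (\<chi> i. a$i * b$i)"
  unfolding diag_mat_def matrix_vector_mult_def vec_eq_iff
  by (simp add: if_distrib[of "\<lambda>x. x * _"] cong: if_cong)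

lemma diag_diag: "diag_mat a ** diag_mat b = diag_mat (\<chi> i. a$i * b$i)"
  unfolding diag_mat_def matrix_matrix_mult_def vec_eq_iff
  by (auto simp add: if_distrib[of "\<lambda>x. x * _"] if_distrib[of "\<lambda>x. _ * x"] cong: if_cong)

lemma diag_one: "diag_mat (\<chi> i. 1) = mat 1"
  by (simp add: diag_mat_def mat_def vec_eq_iff)

lemma mpow_Suc: "mpow M (Suc m) = M ** mpow M m" by (simp add: mpow_def)
lemma mpow_0: "mpow M 0 = mat 1" by (simp add: mpow_def)

lemma orth_right:
  fixes U :: "real^'n^'n"
  assumes "transpose U ** U = mat 1" shows "U ** transpose U = mat 1"
  using assms matrix_left_right_inverse by blast

lemma mpow_eig:
  fixes U :: "real^'n^'n"
  assumes o1: "transpose U ** U = mat 1"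
  shows "mpow (U ** diag_mat d ** transpose U) m = U ** diag_mat (\<chi> k. d$k ^ m) ** transpose U"
proof (induction m)
  case 0
  then show ?case using orth_right[OF o1] by (simp add: mpow_0 diag_one)
next
  case (Suc m)
  have "U ** diag_mat d ** transpose U ** (U ** diag_mat (\<chi> k. d$k ^ m) ** transpose U)
      = U ** diag_mat d ** (transpose U ** U) ** diag_mat (\<chi> k. d$k ^ m) ** transpose U"
    by (simp add: matrix_mul_assoc)
  also have "\<dots> = U ** (diag_mat d ** diag_mat (\<chi> k. d$k ^ m)) ** transpose U"
    by (simp add: o1 matrix_mul_assoc)
  also have "\<dots> = U ** diag_mat (\<chi> k. d$k ^ Suc m) ** transpose U"
    by (simp add: diag_diag)
  finally show ?case by (simp add: mpow_Suc Suc)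
qed

lemma f_one_eq: "f_one U = U *v vec 1"
  by (simp add: f_one_def vec_eq_iff sum_component column_def matrix_vector_mult_def)

lemma UtU_vec:
  fixes U :: "real^'n^'n"
  assumes "transpose U ** U = mat 1" shows "transpose U *v (U *v x) = x"
  by (simp only: matrix_vector_mul_assoc assms matrix_vector_mul_lid)

lemma inner_Uv:
  fixes U :: "real^'n^'n"
  shows "x \<bullet> (U *v z) = (transpose U *v x) \<bullet> z"
  by (metis dot_lmul_matrix transpose_matrix_vector)

lemma kernel_eq:
  fixes U :: "real^'n^'n"
  shows "kernel_mat U f = U ** diag_mat (transpose U *v f) ** transpose U"
proof -
  have "conv_op U (axis j 1) *v f = (U ** diag_mat (transpose U *v f) ** transpose U) *v axis j 1" for j
  proof -
    have "conv_op U (axis j 1) *v f = U *v (diag_mat (transpose U *v axis j 1) *v (transpose U *v f))"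
      unfolding conv_op_def gft_def by (simp only: matrix_vector_mul_assoc matrix_mul_assoc)
    also have "\<dots> = U *v (diag_mat (transpose U *v f) *v (transpose U *v axis j 1))"
      by (simp only: diag_mult_vec mult.commute)
    also have "\<dots> = (U ** diag_mat (transpose U *v f) ** transpose U) *v axis j 1"
      by (simp only: matrix_vector_mul_assoc matrix_mul_assoc)
    finally show ?thesis .
  qed
  then show ?thesis
    unfolding kernel_mat_def by (simp add: matrix_vector_mult_basis column_def vec_eq_iff)
qed

lemma quad_K:
  fixes U :: "real^'n^'n"
  shows "x \<bullet> ((U ** diag_mat a ** transpose U) *v x) = (\<Sum>k\<in>UNIV. a$k * ((transpose U *v x)$k)^2)"
proof -
  have "x \<bullet> ((U ** diag_mat a ** transpose U) *v x) = (transpose U *v x) \<bullet> (diag_mat a *v (transpose U *v x))"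
    by (simp only: inner_Uv matrix_vector_mul_assoc[symmetric])
  then show ?thesis by (simp add: diag_mult_vec inner_vec_def power2_eq_square mult_ac)
qed

lemma transpose_K:
  fixes U :: "real^'n^'n"
  shows "transpose (U ** diag_mat a ** transpose U) = U ** diag_mat a ** transpose U"
proof -
  have "transpose (diag_mat a) = diag_mat a" by (simp add: diag_mat_def transpose_def vec_eq_iff)
  then show ?thesis by (simp add: matrix_transpose_mul matrix_mul_assoc)
qed

lemma axis_sq: "a$i * ((axis k (1::real))$i)^2 = (if k = i then a$k else 0)"
  by (simp add: axis_def)

lemma psd_K:
  fixes U :: "real^'n^'n"
  assumes o1: "transpose U ** U = mat 1"
  shows "psd_mat (U ** diag_mat a ** transpose U) \<longleftrightarrow> (\<forall>k. 0 \<le> a$k)"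
proof
  assume h: "psd_mat (U ** diag_mat a ** transpose U)"
  show "\<forall>k. 0 \<le> a$k"
  proof
    fix k
    have "0 \<le> (\<Sum>i\<in>UNIV. a$i * ((transpose U *v (U *v axis k 1))$i)^2)"
      using h unfolding psd_mat_def quad_K by blast
    also have "\<dots> = a$k"
      by (simp only: UtU_vec[OF o1] axis_sq sum.delta' finite UNIV_I if_True)
    finally show "0 \<le> a$k" .
  qed
next
  assume "\<forall>k. 0 \<le> a$k"
  then show "psd_mat (U ** diag_mat a ** transpose U)"
    unfolding psd_mat_def quad_K transpose_K by (auto intro!: sum_nonneg)
qed

lemma pd_K:
  fixes U :: "real^'n^'n"
  assumes o1: "transpose U ** U = mat 1"
  shows "pd_mat (U ** diag_mat a ** transpose U) \<longleftrightarrow> (\<forall>k. 0 < a$k)"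
proof
  assume h: "pd_mat (U ** diag_mat a ** transpose U)"
  show "\<forall>k. 0 < a$k"
  proof
    fix k
    have "U *v axis k 1 \<noteq> 0"
    proof
      assume "U *v axis k 1 = 0"
      then have "transpose U *v (U *v axis k 1) = 0" by simp
      then show False by (simp only: UtU_vec[OF o1]) (simp add: axis_eq_0_iff)
    qed
    then have "0 < (\<Sum>i\<in>UNIV. a$i * ((transpose U *v (U *v axis k 1))$i)^2)"
      using h unfolding pd_mat_def quad_K by blast
    also have "\<dots> = a$k"
      by (simp only: UtU_vec[OF o1] axis_sq sum.delta' finite UNIV_I if_True)
    finally show "0 < a$k" .
  qed
next
  assume pos: "\<forall>k. 0 < a$k"
  have "0 < (\<Sum>k\<in>UNIV. a$k * ((transpose U *v x)$k)^2)" if "x \<noteq> 0" for x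
  proof -
    have "transpose U *v x \<noteq> 0"
    proof
      assume "transpose U *v x = 0"
      then have "U *v (transpose U *v x) = 0" by simp
      then show False using that orth_right[OF o1]
        by (simp only: matrix_vector_mul_assoc matrix_vector_mul_lid)
    qed
    then obtain k where k: "(transpose U *v x)$k \<noteq> 0" by (auto simp: vec_eq_iff)
    have "a$k * ((transpose U *v x)$k)^2 \<le> (\<Sum>k\<in>UNIV. a$k * ((transpose U *v x)$k)^2)"
      by (rule member_le_sum) (use pos in \<open>auto intro!: mult_nonneg_nonneg simp: less_imp_le\<close>)
    moreover have "0 < a$k * ((transpose U *v x)$k)^2" using pos k by simp
    ultimately show ?thesis by linarith
  qed
  then show "pd_mat (U ** diag_mat a ** transpose U)"
    unfolding pd_mat_def quad_K transpose_K by blast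
qed

lemma quad_H:
  fixes S :: "real set" and c :: "nat \<Rightarrow> real"
  shows "(\<Sum>i<r. \<Sum>j<r. c i * (\<Sum>\<mu>\<in>S. \<mu>^(i+j) * w \<mu>) * c j) = (\<Sum>\<mu>\<in>S. w \<mu> * (\<Sum>i<r. c i * \<mu>^i)^2)"
proof -
  have "(\<Sum>i<r. \<Sum>j<r. c i * (\<Sum>\<mu>\<in>S. \<mu>^(i+j) * w \<mu>) * c j)
     = (\<Sum>i<r. \<Sum>j<r. \<Sum>\<mu>\<in>S. w \<mu> * ((c i * \<mu>^i) * (c j * \<mu>^j)))"
    by (simp add: sum_distrib_left sum_distrib_right power_add mult_ac)
  also have "\<dots> = (\<Sum>i<r. \<Sum>\<mu>\<in>S. \<Sum>j<r. w \<mu> * ((c i * \<mu>^i) * (c j * \<mu>^j)))"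
    by (rule sum.cong[OF refl], rule sum.swap)
  also have "\<dots> = (\<Sum>\<mu>\<in>S. \<Sum>i<r. \<Sum>j<r. w \<mu> * ((c i * \<mu>^i) * (c j * \<mu>^j)))"
    by (rule sum.swap)
  also have "\<dots> = (\<Sum>\<mu>\<in>S. w \<mu> * (\<Sum>i<r. c i * \<mu>^i)^2)"
  proof (rule sum.cong[OF refl])
    fix \<mu>
    have "(\<Sum>i<r. c i * \<mu>^i)^2 = (\<Sum>i<r. \<Sum>j<r. (c i * \<mu>^i) * (c j * \<mu>^j))"
      by (simp only: power2_eq_square sum_product)
    then show "(\<Sum>i<r. \<Sum>j<r. w \<mu> * ((c i * \<mu>^i) * (c j * \<mu>^j))) = w \<mu> * (\<Sum>i<r. c i * \<mu>^i)^2"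
      by (simp add: sum_distrib_left)
  qed
  finally show ?thesis .
qed

lemma poly_lt:
  fixes p :: "real poly"
  assumes "degree p < r" shows "poly p x = (\<Sum>i<r. coeff p i * x^i)"
proof -
  have "poly p x = (\<Sum>i\<le>degree p. coeff p i * x^i)" by (rule poly_altdef)
  also have "\<dots> = (\<Sum>i<r. coeff p i * x^i)"
    by (rule sum.mono_neutral_left) (use assms in \<open>auto simp: coeff_eq_0\<close>)
  finally show ?thesis .
qed

lemma lagrange:
  fixes S :: "real set"
  assumes fin: "finite S" and m0: "\<mu>0 \<in> S" and cS: "card S = r"
  shows "\<exists>c. \<forall>\<mu>\<in>S. (\<Sum>i<r. c i * \<mu>^i) = (if \<mu> = \<mu>0 then 1 else 0)"
proof -
  define q where "q = (\<Prod>\<nu>\<in>S-{\<mu>0}. [:-\<nu>, 1:])"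
  define d where "d = (\<Prod>\<nu>\<in>S-{\<mu>0}. \<mu>0 - \<nu>)"
  define p where "p = smult (1/d) q"
  have d0: "d \<noteq> 0" unfolding d_def using fin by (simp add: prod_zero_iff)
  have "degree q \<le> sum (degree \<circ> (\<lambda>\<nu>. [:-\<nu>, 1:])) (S-{\<mu>0})"
    unfolding q_def by (rule degree_prod_sum_le) (use fin in simp)
  also have "\<dots> = card (S-{\<mu>0})" by simp
  also have "\<dots> < r"
  proof -
    have "r > 0" using cS m0 fin card_gt_0_iff by blast
    then show ?thesis using cS m0 fin by (simp add: card_Diff_singleton)
  qed
  finally have dq: "degree p < r" unfolding p_def by simp
  have pv: "poly p \<mu> = (if \<mu> = \<mu>0 then 1 else 0)" if "\<mu> \<in> S" for \<mu>
  proof (cases "\<mu> = \<mu>0")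
    case True
    then show ?thesis using d0 by (simp add: p_def q_def d_def poly_prod)
  next
    case False
    then have "poly q \<mu> = 0" unfolding q_def poly_prod using fin that
      by (simp add: prod_zero_iff)
    then show ?thesis using False by (simp add: p_def)
  qed
  show ?thesis
    by (rule exI[of _ "coeff p"]) (use pv poly_lt[OF dq] in auto)
qed

lemma nonzero_somewhere:
  fixes S :: "real set"
  assumes fin: "finite S" and cS: "card S = r" and c: "\<exists>i<r. c i \<noteq> 0"
  shows "\<exists>\<mu>\<in>S. (\<Sum>i<r. c i * \<mu>^i) \<noteq> 0"
proof (rule ccontr)
  assume h: "\<not> ?thesis"
  define p where "p = (\<Sum>i<r. monom (c i) i)"
  have cp: "coeff p i = (if i < r then c i else 0)" for i
    unfolding p_def by (simp add: coeff_sum coeff_monom)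
  have p0: "p \<noteq> 0" using c cp by (metis coeff_0)
  have r0: "r > 0" using c by auto
  have "degree p \<le> r - 1" unfolding p_def
    by (rule degree_sum_le) (auto intro: order.trans[OF degree_monom_le])
  then have dp: "degree p < r" using r0 by linarith
  have "S \<subseteq> {x. poly p x = 0}" using h poly_lt[OF dp] cp by auto
  then have "card S \<le> card {x. poly p x = 0}" by (intro card_mono poly_roots_finite p0)
  also have "\<dots> \<le> degree p" by (rule card_poly_roots_bound[OF p0])
  finally show False using cS dp by linarith
qed

lemma psd_H:
  fixes S :: "real set"
  assumes fin: "finite S" and cS: "card S = r"
  shows "psd_fin r (\<lambda>i j. \<Sum>\<mu>\<in>S. \<mu>^(i+j) * w \<mu>) \<longleftrightarrow> (\<forall>\<mu>\<in>S. 0 \<le> w \<mu>)"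
proof
  assume h: "psd_fin r (\<lambda>i j. \<Sum>\<mu>\<in>S. \<mu>^(i+j) * w \<mu>)"
  show "\<forall>\<mu>\<in>S. 0 \<le> w \<mu>"
  proof
    fix \<mu>0 assume m0: "\<mu>0 \<in> S"
    obtain c where c: "\<forall>\<mu>\<in>S. (\<Sum>i<r. c i * \<mu>^i) = (if \<mu> = \<mu>0 then 1 else 0)"
      using lagrange[OF fin m0 cS] by blast
    have "0 \<le> (\<Sum>\<mu>\<in>S. w \<mu> * (\<Sum>i<r. c i * \<mu>^i)^2)"
      using h unfolding psd_fin_def quad_H by blast
    also have "\<dots> = (\<Sum>\<mu>\<in>S. if \<mu>0 = \<mu> then w \<mu>0 else 0)"
      by (rule sum.cong) (use c in auto)
    also have "\<dots> = w \<mu>0" using fin m0 by simp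
    finally show "0 \<le> w \<mu>0" .
  qed
next
  assume "\<forall>\<mu>\<in>S. 0 \<le> w \<mu>"
  then show "psd_fin r (\<lambda>i j. \<Sum>\<mu>\<in>S. \<mu>^(i+j) * w \<mu>)"
    unfolding psd_fin_def quad_H by (auto intro!: sum_nonneg simp: add.commute)
qed

lemma pd_H:
  fixes S :: "real set"
  assumes fin: "finite S" and cS: "card S = r"
  shows "pd_fin r (\<lambda>i j. \<Sum>\<mu>\<in>S. \<mu>^(i+j) * w \<mu>) \<longleftrightarrow> (\<forall>\<mu>\<in>S. 0 < w \<mu>)"
proof
  assume h: "pd_fin r (\<lambda>i j. \<Sum>\<mu>\<in>S. \<mu>^(i+j) * w \<mu>)"
  show "\<forall>\<mu>\<in>S. 0 < w \<mu>"
  proof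
    fix \<mu>0 assume m0: "\<mu>0 \<in> S"
    obtain c where c: "\<forall>\<mu>\<in>S. (\<Sum>i<r. c i * \<mu>^i) = (if \<mu> = \<mu>0 then 1 else 0)"
      using lagrange[OF fin m0 cS] by blast
    have "\<exists>i<r. c i \<noteq> 0"
    proof (rule ccontr)
      assume "\<not> ?thesis"
      then have "(\<Sum>i<r. c i * \<mu>0^i) = 0" by simp
      then show False using c m0 by auto
    qed
    then have "0 < (\<Sum>\<mu>\<in>S. w \<mu> * (\<Sum>i<r. c i * \<mu>^i)^2)"
      using h unfolding pd_fin_def quad_H by blast
    also have "\<dots> = (\<Sum>\<mu>\<in>S. if \<mu>0 = \<mu> then w \<mu>0 else 0)"
      by (rule sum.cong) (use c in auto)
    also have "\<dots> = w \<mu>0" using fin m0 by simp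
    finally show "0 < w \<mu>0" .
  qed
next
  assume pos: "\<forall>\<mu>\<in>S. 0 < w \<mu>"
  have "0 < (\<Sum>\<mu>\<in>S. w \<mu> * (\<Sum>i<r. c i * \<mu>^i)^2)" if ne: "\<exists>i<r. c i \<noteq> 0" for c
  proof -
    obtain \<mu> where m: "\<mu> \<in> S" "(\<Sum>i<r. c i * \<mu>^i) \<noteq> 0"
      using nonzero_somewhere[OF fin cS ne] by blast
    have "w \<mu> * (\<Sum>i<r. c i * \<mu>^i)^2 \<le> (\<Sum>\<mu>\<in>S. w \<mu> * (\<Sum>i<r. c i * \<mu>^i)^2)"
      by (rule member_le_sum) (use pos fin m in \<open>auto intro!: mult_nonneg_nonneg simp: less_imp_le\<close>)
    moreover have "0 < w \<mu> * (\<Sum>i<r. c i * \<mu>^i)^2" using pos m by simp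
    ultimately show ?thesis by linarith
  qed
  then show "pd_fin r (\<lambda>i j. \<Sum>\<mu>\<in>S. \<mu>^(i+j) * w \<mu>)"
    unfolding pd_fin_def quad_H by (auto simp: add.commute)
qed

lemma gen_eq:
  fixes U :: "real^'n^'n"
  assumes o1: "transpose U ** U = mat 1"
  shows "transpose U *v (mpow (U ** diag_mat (\<chi> k. lam k) ** transpose U) m *v f_one U) = (\<chi> k. lam k ^ m)"
proof -
  have "transpose U *v (mpow (U ** diag_mat (\<chi> k. lam k) ** transpose U) m *v f_one U)
     = transpose U *v (U *v (diag_mat (\<chi> k. lam k ^ m) *v (transpose U *v (U *v vec 1))))"
    unfolding mpow_eig[OF o1] f_one_eq by (simp only: matrix_vector_mul_assoc matrix_mul_assoc) simp
  also have "\<dots> = (\<chi> k. lam k ^ m)"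
    by (simp only: UtU_vec[OF o1]) (simp add: diag_mult_vec)
  finally show ?thesis .
qed

lemma sub_const:
  fixes M :: "real^'n^'n" and lam :: "'n \<Rightarrow> real"
  shows "subspace {x. \<forall>i j. lam i = lam j \<longrightarrow> (M *v x)$i = (M *v x)$j}"
  unfolding subspace_def mem_Collect_eq
proof (intro conjI ballI allI impI)
  fix i j :: 'n
  show "(M *v 0)$i = (M *v 0)$j" by simp
next
  fix x y i j
  assume hx: "x \<in> {x. \<forall>i j. lam i = lam j \<longrightarrow> (M *v x)$i = (M *v x)$j}"
    and hy: "y \<in> {x. \<forall>i j. lam i = lam j \<longrightarrow> (M *v x)$i = (M *v x)$j}" and l: "lam i = lam j"
  have a: "(M *v x)$i = (M *v x)$j" "(M *v y)$i = (M *v y)$j" using hx hy l by blast+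
  show "(M *v (x + y))$i = (M *v (x + y))$j"
    unfolding matrix_vector_right_distrib vector_add_component using a by simp
next
  fix c x i j
  assume hx: "x \<in> {x. \<forall>i j. lam i = lam j \<longrightarrow> (M *v x)$i = (M *v x)$j}" and l: "lam i = lam j"
  have a: "(M *v x)$i = (M *v x)$j" using hx l by blast
  show "(M *v (c *\<^sub>R x))$i = (M *v (c *\<^sub>R x))$j"
    unfolding matrix_vector_mult_scaleR vector_scaleR_component using a by simp
qed

lemma krylov_const:
  fixes U :: "real^'n^'n"
  assumes o1: "transpose U ** U = mat 1"
    and f_in: "f \<in> krylov_space (U ** diag_mat (\<chi> k. lam k) ** transpose U) U"
  shows "lam i = lam j \<Longrightarrow> (transpose U *v f)$i = (transpose U *v f)$j"
proof -
  let ?P = "\<lambda>x. \<forall>i j. lam i = lam j \<longrightarrow> (transpose U *v x)$i = (transpose U *v x)$j"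
  have sub: "subspace (Collect ?P)" by (rule sub_const)
  have gens: "?P x" if "x \<in> {mpow (U ** diag_mat (\<chi> k. lam k) ** transpose U) k *v f_one U | k. k < CARD('n)}" for x
  proof -
    from that obtain k where xk: "x = mpow (U ** diag_mat (\<chi> k. lam k) ** transpose U) k *v f_one U"
      by (auto simp only: mem_Collect_eq)
    show ?thesis unfolding xk gen_eq[OF o1] by (simp only: vec_lambda_beta) simp
  qed
  have "?P f" using f_in unfolding krylov_space_def by (rule span_induct[OF _ sub gens])
  then show "lam i = lam j \<Longrightarrow> (transpose U *v f)$i = (transpose U *v f)$j" by blast
qed

lemma hankel_eq:
  fixes U :: "real^'n^'n"
  assumes o1: "transpose U ** U = mat 1"
  shows "hankel (U ** diag_mat (\<chi> k. lam k) ** transpose U) U f i j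
     = (\<Sum>\<mu>\<in>range lam. \<mu>^(i+j) * (\<Sum>k\<in>{k. lam k = \<mu>}. (transpose U *v f)$k))"
proof -
  let ?fh = "transpose U *v f"
  have "hankel (U ** diag_mat (\<chi> k. lam k) ** transpose U) U f i j
     = (U *v vec 1) \<bullet> (U *v (diag_mat (\<chi> k. lam k ^ (i+j)) *v ?fh))"
    unfolding hankel_def mpow_eig[OF o1] f_one_eq by (simp only: matrix_vector_mul_assoc matrix_mul_assoc vec_lambda_beta)
  also have "\<dots> = vec 1 \<bullet> (diag_mat (\<chi> k. lam k ^ (i+j)) *v ?fh)"
    by (simp only: inner_Uv[of "U *v vec 1" U] UtU_vec[OF o1])
  also have "\<dots> = (\<Sum>k\<in>UNIV. lam k ^ (i+j) * ?fh$k)"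
    by (simp add: inner_vec_def diag_mult_vec)
  also have "\<dots> = (\<Sum>\<mu>\<in>range lam. \<Sum>k\<in>{x. x \<in> UNIV \<and> lam x = \<mu>}. lam k ^ (i+j) * ?fh$k)"
    by (rule sum.image_gen) simp
  also have "\<dots> = (\<Sum>\<mu>\<in>range lam. \<mu>^(i+j) * (\<Sum>k\<in>{k. lam k = \<mu>}. ?fh$k))"
    by (rule sum.cong[OF refl]) (simp add: sum_distrib_left)
  finally show ?thesis .
qed

lemma w_eq:
  fixes a :: "real^'n"
  assumes c: "\<And>i j. lam i = lam j \<Longrightarrow> a$i = a$j"
  shows "(\<Sum>k\<in>{k. lam k = lam i}. a$k) = real (card {k. lam k = lam i}) * a$i"
    and "card {k. lam k = lam i} > 0"
proof -
  show "(\<Sum>k\<in>{k. lam k = lam i}. a$k) = real (card {k. lam k = lam i}) * a$i"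
  proof -
    have "(\<Sum>k\<in>{k. lam k = lam i}. a$k) = (\<Sum>k\<in>{k. lam k = lam i}. a$i)"
      by (rule sum.cong[OF refl]) (use c in blast)
    then show ?thesis by simp
  qed
  have "i \<in> {k. lam k = lam i}" by simp
  then show "card {k. lam k = lam i} > 0" using card_gt_0_iff finite by blast
qed

theorem theorem3:
  fixes A U :: "real ^ 'n ^ 'n" and lam :: "'n \<Rightarrow> real" and f :: "real ^ 'n" and r :: nat
  assumes sym: "transpose A = A"
    and nonneg: "\<forall>i j. 0 \<le> A $ i $ j"
    and deg_pos: "\<forall>i. 0 < degree_vec A $ i"
    and orth: "transpose U ** U = mat 1"
    and eig: "norm_laplacian A = U ** diag_mat (\<chi> k. lam k) ** transpose U"
    and r_def: "card (range lam) = r"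
    and f_in: "f \<in> krylov_space (norm_laplacian A) U"
  shows "(psd_function U f \<longleftrightarrow> psd_fin r (hankel (norm_laplacian A) U f)) \<and>
         (pd_function U f \<longleftrightarrow> pd_fin r (hankel (norm_laplacian A) U f))"
proof -
  let ?fh = "transpose U *v f"
  define w where "w \<mu> = (\<Sum>k\<in>{k. lam k = \<mu>}. ?fh$k)" for \<mu>
  have fin: "finite (range lam)" by simp
  have c: "\<And>i j. lam i = lam j \<Longrightarrow> ?fh$i = ?fh$j"
    using krylov_const[OF orth f_in[unfolded eig]] by blast
  have H: "hankel (norm_laplacian A) U f = (\<lambda>i j. \<Sum>\<mu>\<in>range lam. \<mu>^(i+j) * w \<mu>)"
    by (intro ext) (simp only: eig hankel_eq[OF orth] w_def)
  have K: "kernel_mat U f = U ** diag_mat ?fh ** transpose U" by (rule kernel_eq)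
  have W1: "(\<forall>k. 0 \<le> ?fh$k) \<longleftrightarrow> (\<forall>\<mu>\<in>range lam. 0 \<le> w \<mu>)"
  proof
    assume "\<forall>k. 0 \<le> ?fh$k"
    then show "\<forall>\<mu>\<in>range lam. 0 \<le> w \<mu>" unfolding w_def by (auto intro!: sum_nonneg)
  next
    assume h: "\<forall>\<mu>\<in>range lam. 0 \<le> w \<mu>"
    show "\<forall>k. 0 \<le> ?fh$k"
    proof
      fix k
      have "0 \<le> w (lam k)" using h by simp
      also have "w (lam k) = real (card {k'. lam k' = lam k}) * ?fh$k"
        unfolding w_def by (rule w_eq(1)[OF c])
      finally show "0 \<le> ?fh$k" using w_eq(2)[OF c, of lam k] by (simp add: zero_le_mult_iff) blast
    qed
  qed
  have W2: "(\<forall>k. 0 < ?fh$k) \<longleftrightarrow> (\<forall>\<mu>\<in>range lam. 0 < w \<mu>)"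
  proof
    assume a: "\<forall>k. 0 < ?fh$k"
    show "\<forall>\<mu>\<in>range lam. 0 < w \<mu>"
    proof
      fix \<mu> assume "\<mu> \<in> range lam"
      then obtain k where k: "\<mu> = lam k" by blast
      have "w (lam k) = real (card {k'. lam k' = lam k}) * ?fh$k"
        unfolding w_def by (rule w_eq(1)[OF c])
      then show "0 < w \<mu>" using k a w_eq(2)[OF c, of lam k] by simp
    qed
  next
    assume h: "\<forall>\<mu>\<in>range lam. 0 < w \<mu>"
    show "\<forall>k. 0 < ?fh$k"
    proof
      fix k
      have "0 < w (lam k)" using h by simp
      also have "w (lam k) = real (card {k'. lam k' = lam k}) * ?fh$k"
        unfolding w_def by (rule w_eq(1)[OF c])
      finally show "0 < ?fh$k" using w_eq(2)[OF c, of lam k] by (simp add: zero_less_mult_iff)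
    qed
  qed
  show ?thesis
    unfolding psd_function_def pd_function_def K H psd_K[OF orth] pd_K[OF orth]
      psd_H[OF fin r_def] pd_H[OF fin r_def] W1 W2 by (rule conjI refl)+
qed

end
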